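(* Let $X$ be any Tychonoff space and let $E$ be a Banach space. Then every sequentially continuous linear operator $T:C_p(X)\to E_w$ has a finite-dimensional range.
   Context: For a Tychonoff space $X$, $C_p(X)$ denotes the space of all continuous real-valued functions on $X$ with the topology of pointwise convergence. For a Banach space $E$, $E_w$ denotes $E$ endowed with its weak topology $\sigma(E,E')$. A map between topological spaces is sequentially continuous if it sends convergent sequences to convergent sequences (with the corresponding limits). *)

theory Defs
  imports "HOL-Analysis.Analysis"
begin

definition tychonoff_space :: "'a topology \<Rightarrow> bool" where
  "tychonoff_space X \<longleftrightarrow> completely_regular_space X \<and> Hausdorff_space X"

text \<open>C(X): continuous real functions on X, represented extensionally (value 0 off topspace X).\<close>
definition Cfun :: "'a topology \<Rightarrow> ('a \<Rightarrow> real) set" where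
  "Cfun X = {f. continuous_map X euclideanreal f \<and> (\<forall>x. x \<notin> topspace X \<longrightarrow> f x = 0)}"

definition Cp_converges :: "'a topology \<Rightarrow> (nat \<Rightarrow> 'a \<Rightarrow> real) \<Rightarrow> ('a \<Rightarrow> real) \<Rightarrow> bool" where
  "Cp_converges X fs f \<longleftrightarrow> (\<forall>x\<in>topspace X. (\<lambda>n. fs n x) \<longlonglongrightarrow> f x)"

definition weak_converges :: "(nat \<Rightarrow> 'b::real_normed_vector) \<Rightarrow> 'b \<Rightarrow> bool" where
  "weak_converges ys y \<longleftrightarrow>
     (\<forall>\<phi>::'b \<Rightarrow> real. bounded_linear \<phi> \<longrightarrow> (\<lambda>n. \<phi> (ys n)) \<longlonglongrightarrow> \<phi> y)"

definition linear_on_Cp :: "'a topology \<Rightarrow> (('a \<Rightarrow> real) \<Rightarrow> 'b::real_vector) \<Rightarrow> bool" where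
  "linear_on_Cp X T \<longleftrightarrow>
     (\<forall>f\<in>Cfun X. \<forall>g\<in>Cfun X. \<forall>a b::real. T (\<lambda>x. a * f x + b * g x) = a *\<^sub>R T f + b *\<^sub>R T g)"

definition seq_continuous_Cp_weak :: "'a topology \<Rightarrow> (('a \<Rightarrow> real) \<Rightarrow> 'b::real_normed_vector) \<Rightarrow> bool" where
  "seq_continuous_Cp_weak X T \<longleftrightarrow>
     (\<forall>fs f. (\<forall>n. fs n \<in> Cfun X) \<and> f \<in> Cfun X \<and> Cp_converges X fs f
        \<longrightarrow> weak_converges (\<lambda>n. T (fs n)) (T f))"

end

theory Submission
  imports Defs
begin


definition hb_good :: "('b::real_normed_vector \<times> real) set \<Rightarrow> bool" where
  "hb_good G \<longleftrightarrow> (0,0) \<in> G \<and> (\<forall>x a y b. (x,a)\<in>G \<longrightarrow> (y,b)\<in>G \<longrightarrow> (x+y,a+b)\<in>G)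
     \<and> (\<forall>x a c. (x,a)\<in>G \<longrightarrow> (c *\<^sub>R x, c*a) \<in> G) \<and> (\<forall>x a. (x,a)\<in>G \<longrightarrow> a \<le> norm x)"

lemma hb_extend:
  fixes M :: "('b::real_normed_vector \<times> real) set"
  assumes g: "hb_good M" and z: "z \<notin> fst ` M"
  shows "\<exists>G. hb_good G \<and> M \<subset> G"
proof -
  have M0: "(0,0) \<in> M" and Madd: "\<And>x a y b. (x,a)\<in>M \<Longrightarrow> (y,b)\<in>M \<Longrightarrow> (x+y,a+b)\<in>M"
    and Msc: "\<And>x a c. (x,a)\<in>M \<Longrightarrow> (c *\<^sub>R x, c*a) \<in> M"
    and Mdom: "\<And>x a. (x,a)\<in>M \<Longrightarrow> a \<le> norm x"
    using g unfolding hb_good_def by blast+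
  define S where "S = {a - norm (m - z) | m a. (m,a)\<in>M}"
  define c where "c = Sup S"
  have key: "a - norm (m - z) \<le> norm (m' + z) - a'" if "(m,a)\<in>M" "(m',a')\<in>M" for m a m' a'
  proof -
    have "a + a' \<le> norm (m + m')" using Mdom[OF Madd[OF that]] .
    also have "\<dots> = norm ((m - z) + (m' + z))" by (simp add: algebra_simps)
    also have "\<dots> \<le> norm (m - z) + norm (m' + z)" by (rule norm_triangle_ineq)
    finally show ?thesis by simp
  qed
  have Sne: "S \<noteq> {}" using M0 unfolding S_def by blast
  have bdd: "bdd_above S" unfolding S_def bdd_above_def using key[OF _ M0] by fastforce
  have c_ge: "a - norm (m - z) \<le> c" if "(m,a)\<in>M" for m a
    unfolding c_def by (rule cSup_upper[OF _ bdd]) (use that S_def in blast)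
  have c_le: "c \<le> norm (m' + z) - a'" if "(m',a')\<in>M" for m' a'
    unfolding c_def by (rule cSup_least[OF Sne]) (use key that S_def in blast)
  define G where "G = {(m + t *\<^sub>R z, a + t * c) | m a t. (m,a)\<in>M}"
  have Gin: "(m + t *\<^sub>R z, a + t * c) \<in> G" if "(m,a)\<in>M" for m a t
    unfolding G_def using that by blast
  have "hb_good G"
    unfolding hb_good_def
  proof (intro conjI allI impI)
    show "(0,0) \<in> G" unfolding G_def using M0 by force
  next
    fix x a y b assume "(x,a)\<in>G" "(y,b)\<in>G"
    then obtain m1 a1 t1 m2 a2 t2 where "(m1,a1)\<in>M" "(m2,a2)\<in>M" "x = m1 + t1 *\<^sub>R z" "a = a1 + t1*c"
      "y = m2 + t2 *\<^sub>R z" "b = a2 + t2*c" unfolding G_def by blast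
    then show "(x+y,a+b)\<in>G" using Gin[OF Madd, of m1 a1 m2 a2 "t1+t2"]
      by (simp add: algebra_simps)
  next
    fix x a r assume "(x,a)\<in>G"
    then obtain m1 a1 t1 where "(m1,a1)\<in>M" "x = m1 + t1 *\<^sub>R z" "a = a1 + t1*c" unfolding G_def by blast
    then show "(r *\<^sub>R x, r*a)\<in>G" using Gin[OF Msc, of m1 a1 r "r*t1"]
      by (simp add: algebra_simps)
  next
    fix x a assume "(x,a)\<in>G"
    then obtain m a1 t where m: "(m,a1)\<in>M" and x: "x = m + t *\<^sub>R z" and a: "a = a1 + t*c" unfolding G_def by blast
    consider "t = 0" | "t > 0" | "t < 0" by linarith
    then show "a \<le> norm x"
    proof cases
      case 1 then show ?thesis using Mdom[OF m] x a by simp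
    next
      case 2
      have "c \<le> norm ((1/t) *\<^sub>R m + z) - (1/t)*a1" using c_le[OF Msc[OF m]] .
      then have "t * c \<le> t * (norm ((1/t) *\<^sub>R m + z) - (1/t)*a1)" using 2 by (simp add: mult_left_mono)
      also have "\<dots> = norm (t *\<^sub>R ((1/t) *\<^sub>R m + z)) - a1" using 2 by (simp add: right_diff_distrib)
      also have "t *\<^sub>R ((1/t) *\<^sub>R m + z) = m + t *\<^sub>R z" using 2 by (simp add: scaleR_add_right)
      finally show ?thesis using x a by simp
    next
      case 3
      define s where "s = -t"
      have s: "s > 0" using 3 s_def by simp
      have "(1/s)*a1 - norm ((1/s) *\<^sub>R m - z) \<le> c" using c_ge[OF Msc[OF m]] .
      then have h1: "a1 - s*c \<le> s * norm ((1/s) *\<^sub>R m - z)" using s by (simp add: field_simps)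
      have h2: "s * norm ((1/s) *\<^sub>R m - z) = norm (s *\<^sub>R ((1/s) *\<^sub>R m - z))" using s by simp
      have h3: "s *\<^sub>R ((1/s) *\<^sub>R m - z) = m + t *\<^sub>R z" using s s_def by (simp add: scaleR_diff_right)
      have h4: "norm (m + t *\<^sub>R z) = s * norm ((1/s) *\<^sub>R m - z)" using h2 h3 by metis
      have "a1 + t * c = a1 - s * c" using s_def by simp
      then show ?thesis using h1 h4 unfolding x a by linarith
    qed
  qed
  moreover have "M \<subseteq> G"
  proof
    fix p assume "p \<in> M"
    then show "p \<in> G" using Gin[of "fst p" "snd p" 0] by simp
  qed
  moreover have "(z, c) \<in> G" using Gin[OF M0, of 1] by simp
  moreover have "(z, c) \<notin> M" using z by force
  ultimately show ?thesis by blast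
qed

lemma hahn_banach_point:
  fixes y :: "'b::real_normed_vector"
  shows "\<exists>\<phi>. bounded_linear \<phi> \<and> \<phi> y = norm y"
proof -
  define G0 where "G0 = {(t *\<^sub>R y, t * norm y) | t. True}"
  define A where "A = {G. hb_good G \<and> G0 \<subseteq> G}"
  have G0g: "hb_good G0" unfolding hb_good_def G0_def
  proof (intro conjI allI impI)
    show "(0::'b, 0::real) \<in> {(t *\<^sub>R y, t * norm y) |t. True}" by (force intro: exI[of _ 0])
  next
    fix x a x' b assume "(x, a) \<in> {(t *\<^sub>R y, t * norm y) |t. True}" "(x', b) \<in> {(t *\<^sub>R y, t * norm y) |t. True}"
    then obtain t1 t2 where "x = t1 *\<^sub>R y" "a = t1 * norm y" "x' = t2 *\<^sub>R y" "b = t2 * norm y" by blast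
    then show "(x + x', a + b) \<in> {(t *\<^sub>R y, t * norm y) |t. True}"
      by (auto intro!: exI[of _ "t1+t2"] simp: algebra_simps)
  next
    fix x a r assume "(x, a) \<in> {(t *\<^sub>R y, t * norm y) |t. True}"
    then obtain t1 where "x = t1 *\<^sub>R y" "a = t1 * norm y" by blast
    then show "(r *\<^sub>R x, r * a) \<in> {(t *\<^sub>R y, t * norm y) |t. True}"
      by (auto intro!: exI[of _ "r*t1"] simp: algebra_simps)
  next
    fix x a assume "(x, a) \<in> {(t *\<^sub>R y, t * norm y) |t. True}"
    then obtain t1 where "x = t1 *\<^sub>R y" "a = t1 * norm y" by blast
    then show "a \<le> norm x" by (simp add: mult_right_mono)
  qed
  have "\<exists>M\<in>A. \<forall>X\<in>A. M \<subseteq> X \<longrightarrow> X = M"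
  proof (rule Zorn_Lemma2, intro ballI)
    fix C assume C: "C \<in> chains A"
    show "\<exists>U\<in>A. \<forall>X\<in>C. X \<subseteq> U"
    proof (cases "C = {}")
      case True then show ?thesis using G0g A_def by auto
    next
      case False
      have CA: "C \<subseteq> A" and ch: "\<And>X Y. X \<in> C \<Longrightarrow> Y \<in> C \<Longrightarrow> X \<subseteq> Y \<or> Y \<subseteq> X"
        using C unfolding chains_def chain_subset_def by blast+
      have gd: "\<And>X. X \<in> C \<Longrightarrow> hb_good X" and g0: "\<And>X. X \<in> C \<Longrightarrow> G0 \<subseteq> X" using CA A_def by auto
      have "hb_good (\<Union>C)" unfolding hb_good_def
      proof (intro conjI allI impI)
        show "(0,0) \<in> \<Union>C" using False gd hb_good_def by blast
      next
        fix x a x' b assume "(x,a) \<in> \<Union>C" "(x',b) \<in> \<Union>C"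
        then obtain X Y where "X \<in> C" "Y \<in> C" "(x,a)\<in>X" "(x',b)\<in>Y" by blast
        then show "(x+x',a+b) \<in> \<Union>C"
        proof (cases "X \<subseteq> Y")
          case True
          then have "(x+x',a+b) \<in> Y" using gd[OF \<open>Y \<in> C\<close>] \<open>(x,a)\<in>X\<close> \<open>(x',b)\<in>Y\<close> unfolding hb_good_def by blast
          then show ?thesis using \<open>Y \<in> C\<close> by blast
        next
          case False
          then have "Y \<subseteq> X" using ch[OF \<open>X \<in> C\<close> \<open>Y \<in> C\<close>] by blast
          then have "(x+x',a+b) \<in> X" using gd[OF \<open>X \<in> C\<close>] \<open>(x,a)\<in>X\<close> \<open>(x',b)\<in>Y\<close> unfolding hb_good_def by blast
          then show ?thesis using \<open>X \<in> C\<close> by blast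
        qed
      next
        fix x a r assume "(x,a) \<in> \<Union>C"
        then show "(r *\<^sub>R x, r*a) \<in> \<Union>C" using gd unfolding hb_good_def by blast
      next
        fix x a assume "(x,a) \<in> \<Union>C"
        then show "a \<le> norm x" using gd unfolding hb_good_def by blast
      qed
      moreover have "G0 \<subseteq> \<Union>C" using False g0 by blast
      ultimately show ?thesis unfolding A_def by blast
    qed
  qed
  then obtain M where MA: "M \<in> A" and Mmax: "\<And>X. X \<in> A \<Longrightarrow> M \<subseteq> X \<Longrightarrow> X = M" by blast
  have Mg: "hb_good M" and G0M: "G0 \<subseteq> M" using MA A_def by auto
  have M0: "(0,0) \<in> M" and Madd: "\<And>x a y b. (x,a)\<in>M \<Longrightarrow> (y,b)\<in>M \<Longrightarrow> (x+y,a+b)\<in>M"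
    and Msc: "\<And>x a c. (x,a)\<in>M \<Longrightarrow> (c *\<^sub>R x, c*a) \<in> M"
    and Mdom: "\<And>x a. (x,a)\<in>M \<Longrightarrow> a \<le> norm x"
    using Mg unfolding hb_good_def by blast+
  have tot: "\<exists>a. (x,a) \<in> M" for x
  proof (rule ccontr)
    assume "\<nexists>a. (x, a) \<in> M"
    then have "x \<notin> fst ` M" by force
    from hb_extend[OF Mg this] obtain G where "hb_good G" "M \<subset> G" by blast
    then have "G \<in> A" using G0M A_def by auto
    with Mmax \<open>M \<subset> G\<close> show False by blast
  qed
  have uniq: "a = b" if "(x,a)\<in>M" "(x,b)\<in>M" for x a b
  proof -
    have "(x + (-1) *\<^sub>R x, a + (-1)*b) \<in> M" using Madd[OF that(1) Msc[OF that(2)]] .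
    then have "a - b \<le> 0" using Mdom by fastforce
    moreover have "(x + (-1) *\<^sub>R x, b + (-1)*a) \<in> M" using Madd[OF that(2) Msc[OF that(1)]] .
    then have "b - a \<le> 0" using Mdom by fastforce
    ultimately show ?thesis by simp
  qed
  define \<phi> where "\<phi> x = (THE a. (x,a) \<in> M)" for x
  have phiM: "(x, \<phi> x) \<in> M" for x
    unfolding \<phi>_def using tot[of x] uniq by (metis theI)
  have phi_eq: "\<phi> x = a" if "(x,a) \<in> M" for x a using uniq[OF phiM that] .
  have add: "\<phi> (x + y) = \<phi> x + \<phi> y" for x y using phi_eq[OF Madd[OF phiM phiM]] .
  have sc: "\<phi> (r *\<^sub>R x) = r *\<^sub>R \<phi> x" for r x using phi_eq[OF Msc[OF phiM]] by simp
  have bd: "norm (\<phi> x) \<le> norm x * 1" for x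
  proof -
    have "\<phi> x \<le> norm x" using Mdom[OF phiM] .
    moreover have "\<phi> ((-1) *\<^sub>R x) \<le> norm ((-1) *\<^sub>R x)" using Mdom[OF phiM] .
    then have "- \<phi> x \<le> norm x" using sc[of "-1" x] by simp
    ultimately show ?thesis by simp
  qed
  have "bounded_linear \<phi>" by (rule bounded_linear_intro[OF add sc bd])
  moreover have "(y, norm y) \<in> M" using G0M unfolding G0_def by (force intro: exI[of _ 1])
  then have "\<phi> y = norm y" by (rule phi_eq)
  ultimately show ?thesis by blast
qed



lemma hb_nonzero:
  fixes y :: "'b::real_normed_vector"
  assumes "y \<noteq> 0" shows "\<exists>\<phi>::'b\<Rightarrow>real. bounded_linear \<phi> \<and> \<phi> y \<noteq> 0"
proof -
  obtain \<phi> where "bounded_linear \<phi>" "\<phi> y = norm y" using hahn_banach_point[of y] by blast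
  moreover have "\<phi> y \<noteq> 0" using assms \<open>\<phi> y = norm y\<close> by simp
  ultimately show ?thesis by blast
qed

lemma baire_blinfun:
  fixes y :: "nat \<Rightarrow> 'b::banach"
  assumes ev: "\<And>\<phi>::'b \<Rightarrow>\<^sub>L real. eventually (\<lambda>n. blinfun_apply \<phi> (y n) = 0) sequentially"
  shows "eventually (\<lambda>n. y n = 0) sequentially"
proof -
  define A where "A N = {\<phi>::'b \<Rightarrow>\<^sub>L real. \<forall>n\<ge>N. blinfun_apply \<phi> (y n) = 0}" for N
  have cl: "closed (A N)" for N
  proof -
    have "A N = (\<Inter>n\<in>{N..}. {\<phi>::'b \<Rightarrow>\<^sub>L real. blinfun_apply \<phi> (y n) = 0})"
      unfolding A_def by auto
    moreover have "closed {\<phi>::'b \<Rightarrow>\<^sub>L real. blinfun_apply \<phi> (y n) = 0}" for n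
      by (intro closed_Collect_eq continuous_on_const
          bounded_linear.continuous_on[OF bounded_bilinear.bounded_linear_left[OF bounded_bilinear_blinfun_apply]]
          continuous_on_id)
    ultimately show ?thesis by auto
  qed
  have un: "\<Union>(range A) = UNIV"
  proof -
    have "\<phi> \<in> \<Union>(range A)" for \<phi>
      using ev[of \<phi>] unfolding eventually_sequentially A_def by blast
    then show ?thesis by blast
  qed
  have "\<exists>N. interior (A N) \<noteq> {}"
  proof (rule ccontr)
    assume "\<nexists>N. interior (A N) \<noteq> {}"
    then have "Met_TC.mtopology interior_of \<Union>(range A) = {}"
      by (intro Met_TC.metric_Baire_category_alt) (auto simp: cl complete_UNIV)
    then show False using un by simp
  qed
  then obtain N \<phi>0 where "\<phi>0 \<in> interior (A N)" by blast
  then obtain e where e: "e > 0" "ball \<phi>0 e \<subseteq> A N" using mem_interior by blast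
  have "y n = 0" if "n \<ge> N" for n
  proof (rule ccontr)
    assume "y n \<noteq> 0"
    then obtain \<psi> :: "'b \<Rightarrow> real" where \<psi>: "bounded_linear \<psi>" "\<psi> (y n) \<noteq> 0" using hb_nonzero by blast
    define \<Psi> where "\<Psi> = Blinfun \<psi>"
    have Pa: "blinfun_apply \<Psi> = \<psi>" unfolding \<Psi>_def using \<psi>(1) bounded_linear_Blinfun_apply by blast
    define c where "c = e / (2 * (norm \<Psi> + 1))"
    have d: "0 < norm \<Psi> + 1" using norm_ge_zero[of \<Psi>] by linarith
    have c: "c > 0" using e(1) d unfolding c_def by simp
    have "norm (c *\<^sub>R \<Psi>) = c * norm \<Psi>" using c by simp
    also have "\<dots> < e"
    proof -
      have q: "norm \<Psi> / (2 * (norm \<Psi> + 1)) < 1" using d by (simp add: divide_less_eq)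
      have "c * norm \<Psi> = e * (norm \<Psi> / (2 * (norm \<Psi> + 1)))" unfolding c_def by simp
      also have "\<dots> < e * 1" using q e(1) by (intro mult_strict_left_mono) auto
      finally show ?thesis by simp
    qed
    finally have "\<phi>0 + c *\<^sub>R \<Psi> \<in> ball \<phi>0 e" by (simp add: dist_norm)
    then have "\<phi>0 + c *\<^sub>R \<Psi> \<in> A N" using e by blast
    moreover have "\<phi>0 \<in> A N" using e centre_in_ball by blast
    ultimately have "blinfun_apply (\<phi>0 + c *\<^sub>R \<Psi>) (y n) = 0" "blinfun_apply \<phi>0 (y n) = 0"
      using that unfolding A_def by auto
    then have "c * \<psi> (y n) = 0" by (simp add: blinfun.add_left blinfun.scaleR_left Pa)
    then show False using c \<psi>(2) by simp
  qed
  then show ?thesis unfolding eventually_sequentially by blast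
qed

lemma CfunI: "continuous_map X euclideanreal f \<Longrightarrow> (\<And>x. x \<notin> topspace X \<Longrightarrow> f x = 0) \<Longrightarrow> f \<in> Cfun X"
  unfolding Cfun_def by blast
lemma CfunD: "f \<in> Cfun X \<Longrightarrow> continuous_map X euclideanreal f"
  "f \<in> Cfun X \<Longrightarrow> x \<notin> topspace X \<Longrightarrow> f x = 0"
  unfolding Cfun_def by blast+

lemma Cfun_zero: "(\<lambda>x. 0) \<in> Cfun X" by (rule CfunI) auto
lemma Cfun_lin: "f \<in> Cfun X \<Longrightarrow> g \<in> Cfun X \<Longrightarrow> (\<lambda>x. a * f x + b * g x) \<in> Cfun X"
  by (rule CfunI) (auto intro!: continuous_intros simp: CfunD)
lemma Cfun_add: "f \<in> Cfun X \<Longrightarrow> g \<in> Cfun X \<Longrightarrow> (\<lambda>x. f x + g x) \<in> Cfun X"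
  by (rule CfunI) (auto intro!: continuous_intros simp: CfunD)
lemma Cfun_diff: "f \<in> Cfun X \<Longrightarrow> g \<in> Cfun X \<Longrightarrow> (\<lambda>x. f x - g x) \<in> Cfun X"
  by (rule CfunI) (auto intro!: continuous_intros simp: CfunD)
lemma Cfun_scale: "f \<in> Cfun X \<Longrightarrow> (\<lambda>x. a * f x) \<in> Cfun X"
  by (rule CfunI) (auto intro!: continuous_intros simp: CfunD)
lemma Cfun_mult: "f \<in> Cfun X \<Longrightarrow> continuous_map X euclideanreal g \<Longrightarrow> (\<lambda>x. f x * g x) \<in> Cfun X"
  by (rule CfunI) (auto intro!: continuous_intros simp: CfunD)
lemma Cfun_max0: "f \<in> Cfun X \<Longrightarrow> (\<lambda>x. max (f x) 0) \<in> Cfun X"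
  by (rule CfunI) (auto intro!: continuous_intros simp: CfunD)

locale cpT =
  fixes X :: "'a topology" and T :: "('a \<Rightarrow> real) \<Rightarrow> 'b::banach"
  assumes lin: "linear_on_Cp X T" and sc: "seq_continuous_Cp_weak X T"
begin

definition GG :: "'a set \<Rightarrow> ('a \<Rightarrow> real) set" where
  "GG W = {g \<in> Cfun X. \<forall>x. g x \<noteq> 0 \<longrightarrow> x \<in> W}"
definition nul :: "'a set \<Rightarrow> bool" where
  "nul W \<longleftrightarrow> (\<forall>g\<in>GG W. T g = 0)"
definition fin :: "'a set \<Rightarrow> bool" where
  "fin W \<longleftrightarrow> (\<exists>B. finite B \<and> T ` GG W \<subseteq> span B)"

lemma GGI: "g \<in> Cfun X \<Longrightarrow> (\<And>x. g x \<noteq> 0 \<Longrightarrow> x \<in> W) \<Longrightarrow> g \<in> GG W"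
  unfolding GG_def by blast
lemma GGD: "g \<in> GG W \<Longrightarrow> g \<in> Cfun X" "g \<in> GG W \<Longrightarrow> g x \<noteq> 0 \<Longrightarrow> x \<in> W"
  unfolding GG_def by blast+
lemma nulD: "nul W \<Longrightarrow> g \<in> Cfun X \<Longrightarrow> (\<And>x. g x \<noteq> 0 \<Longrightarrow> x \<in> W) \<Longrightarrow> T g = 0"
  unfolding nul_def using GGI by blast
lemma nul_mono: "nul W \<Longrightarrow> V \<subseteq> W \<Longrightarrow> nul V"
  unfolding nul_def GG_def by blast

lemma Tlin: "f \<in> Cfun X \<Longrightarrow> g \<in> Cfun X \<Longrightarrow> T (\<lambda>x. a * f x + b * g x) = a *\<^sub>R T f + b *\<^sub>R T g"
  using lin unfolding linear_on_Cp_def by blast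
lemma T0: "T (\<lambda>x. 0) = 0"
  using Tlin[OF Cfun_zero Cfun_zero, of 0 0] by simp
lemma Tadd: "f \<in> Cfun X \<Longrightarrow> g \<in> Cfun X \<Longrightarrow> T (\<lambda>x. f x + g x) = T f + T g"
  using Tlin[of f g 1 1] by simp
lemma Tdiff: "f \<in> Cfun X \<Longrightarrow> g \<in> Cfun X \<Longrightarrow> T (\<lambda>x. f x - g x) = T f - T g"
  using Tlin[of f g 1 "-1"] by simp
lemma Tsc: "f \<in> Cfun X \<Longrightarrow> T (\<lambda>x. a * f x) = a *\<^sub>R T f"
  using Tlin[of f f a 0] by simp

lemma Tlim:
  fixes \<phi> :: "'b \<Rightarrow> real"
  assumes "\<And>n. fs n \<in> Cfun X" "f \<in> Cfun X" "\<And>x. x \<in> topspace X \<Longrightarrow> (\<lambda>n. fs n x) \<longlonglongrightarrow> f x"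
    "bounded_linear \<phi>"
  shows "(\<lambda>n. \<phi> (T (fs n))) \<longlonglongrightarrow> \<phi> (T f)"
proof -
  have "weak_converges (\<lambda>n. T (fs n)) (T f)"
    using sc assms(1-3) unfolding seq_continuous_Cp_weak_def Cp_converges_def by blast
  then show ?thesis using assms(4) unfolding weak_converges_def by blast
qed

lemma Tconst_lim:
  assumes "\<And>n. fs n \<in> Cfun X" "f \<in> Cfun X" "\<And>x. x \<in> topspace X \<Longrightarrow> (\<lambda>n. fs n x) \<longlonglongrightarrow> f x"
    "\<And>n. T (fs n) = y"
  shows "T f = y"
proof (rule ccontr)
  assume "T f \<noteq> y"
  then have "T f - y \<noteq> 0" by simp
  then obtain \<phi> :: "'b \<Rightarrow> real" where \<phi>: "bounded_linear \<phi>" "\<phi> (T f - y) \<noteq> 0" using hb_nonzero by blast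
  have "(\<lambda>n. \<phi> y) \<longlonglongrightarrow> \<phi> (T f)" using Tlim[OF assms(1-3) \<phi>(1)] assms(4) by simp
  then have "\<phi> y = \<phi> (T f)" using LIMSEQ_const_iff by blast
  then show False using \<phi> by (simp add: linear_diff[OF bounded_linear.linear[OF \<phi>(1)]])
qed

lemma claimA:
  assumes g: "\<And>n. g n \<in> Cfun X"
    and ev0: "\<And>x. x \<in> topspace X \<Longrightarrow> eventually (\<lambda>n. g n x = 0) sequentially"
  shows "eventually (\<lambda>n. T (g n) = 0) sequentially"
proof (rule baire_blinfun)
  fix \<Phi> :: "'b \<Rightarrow>\<^sub>L real"
  define \<phi> where "\<phi> = blinfun_apply \<Phi>"
  have bl: "bounded_linear \<phi>" unfolding \<phi>_def by (rule blinfun.bounded_linear_right)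
  define c where "c n = inverse (\<phi> (T (g n)))" for n
  define fs where "fs n = (\<lambda>x. c n * g n x)" for n
  have fsC: "fs n \<in> Cfun X" for n unfolding fs_def by (rule Cfun_scale[OF g])
  have "(\<lambda>n. fs n x) \<longlonglongrightarrow> 0" if "x \<in> topspace X" for x
    by (rule tendsto_eventually) (use ev0[OF that] in \<open>auto simp: fs_def elim: eventually_mono\<close>)
  then have "(\<lambda>n. \<phi> (T (fs n))) \<longlonglongrightarrow> \<phi> (T (\<lambda>x. 0))"
    using Tlim[OF fsC Cfun_zero _ bl] by simp
  moreover have "\<phi> (T (\<lambda>x. 0)) = 0" using T0 linear_0[OF bounded_linear.linear[OF bl]] by simp
  moreover have "\<phi> (T (fs n)) = (if \<phi> (T (g n)) = 0 then 0 else 1)" for n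
    unfolding fs_def Tsc[OF g] linear_cmul[OF bounded_linear.linear[OF bl]] c_def by simp
  ultimately have "(\<lambda>n. if \<phi> (T (g n)) = 0 then 0 else 1 :: real) \<longlonglongrightarrow> 0" by simp
  from order_tendstoD(2)[OF this, of "1/2"]
  have "eventually (\<lambda>n. (if \<phi> (T (g n)) = 0 then 0 else 1 :: real) < 1/2) sequentially" by simp
  then show "eventually (\<lambda>n. blinfun_apply \<Phi> (T (g n)) = 0) sequentially"
    by (rule eventually_mono) (auto simp: \<phi>_def split: if_splits)
qed

lemma lemD:
  assumes "\<And>x. x \<in> topspace X \<Longrightarrow> eventually (\<lambda>n. x \<notin> W n) sequentially"
  shows "eventually (\<lambda>n. nul (W n)) sequentially"
proof -
  define g where "g n = (if nul (W n) then (\<lambda>x. 0) else (SOME g. g \<in> GG (W n) \<and> T g \<noteq> 0))" for n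
  have gp: "g n \<in> GG (W n) \<and> T (g n) \<noteq> 0" if "\<not> nul (W n)" for n
  proof -
    have "\<exists>g. g \<in> GG (W n) \<and> T g \<noteq> 0" using that unfolding nul_def by blast
    from someI_ex[OF this] show ?thesis unfolding g_def using that by simp
  qed
  have gC: "g n \<in> Cfun X" for n
    using gp[of n] GGD(1) Cfun_zero unfolding g_def by (cases "nul (W n)") auto
  have "eventually (\<lambda>n. g n x = 0) sequentially" if "x \<in> topspace X" for x
    using assms[OF that]
  proof (rule eventually_mono)
    fix n assume "x \<notin> W n"
    then show "g n x = 0" using gp[of n] GGD(2) unfolding g_def by (cases "nul (W n)") auto
  qed
  from claimA[OF gC this] show ?thesis
  proof (rule eventually_mono)
    fix n assume "T (g n) = 0"
    then show "nul (W n)" using gp[of n] by blast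
  qed
qed

lemma clamp01:
  fixes v :: real
  shows "min 1 (max 0 v) \<noteq> 0 \<Longrightarrow> v > 0" "min 1 (max 0 v) \<noteq> 1 \<Longrightarrow> v < 1"
  by (auto simp: min_def max_def split: if_splits)

lemma clamp_bound:
  fixes g e :: real assumes "e \<ge> 0"
  shows "\<bar>g - max (g - e) 0 + max (- g - e) 0\<bar> \<le> e"
  using assms by (auto simp: max_def)

lemma L2:
  assumes aC: "a \<in> Cfun X" and a0: "\<And>x. a x \<ge> 0" and nn: "\<not> nul {x. a x > 0}"
  shows "\<exists>s>0. \<not> nul {x. a x > s}"
proof (rule ccontr)
  assume "\<not> (\<exists>s>0. \<not> nul {x. a x > s})"
  then have hs: "\<And>s. s > 0 \<Longrightarrow> nul {x. a x > s}" by blast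
  obtain g where g: "g \<in> GG {x. a x > 0}" "T g \<noteq> 0" using nn unfolding nul_def by blast
  have gC: "g \<in> Cfun X" using g GGD by blast
  define W where "W n = {x. 0 < a x \<and> a x < 2 / (real n + 1)}" for n
  have "eventually (\<lambda>n. nul (W n)) sequentially"
  proof (rule lemD)
    fix x
    show "eventually (\<lambda>n. x \<notin> W n) sequentially"
    proof (cases "a x > 0")
      case True
      obtain N where N: "2 / a x < real N" using reals_Archimedean2 by blast
      have "x \<notin> W n" if "n \<ge> N" for n
      proof -
        have "2 / a x < real n + 1" using N that by linarith
        then have "2 < (real n + 1) * a x" using True by (simp add: divide_less_eq)
        then have "2 / (real n + 1) < a x" by (simp add: divide_less_eq mult.commute)
        then show ?thesis unfolding W_def by auto
      qed
      then show ?thesis unfolding eventually_sequentially by blast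
    next
      case False then show ?thesis unfolding W_def by simp
    qed
  qed
  then obtain n where nW: "nul (W n)" unfolding eventually_sequentially by blast
  define p where "p x = min 1 (max 0 ((real n + 1) * a x - 1))" for x
  have pc: "continuous_map X euclideanreal p" unfolding p_def
    using CfunD(1)[OF aC] by (intro continuous_intros) auto
  define gp where "gp x = g x * p x" for x
  have gpC: "gp \<in> Cfun X" unfolding gp_def by (rule Cfun_mult[OF gC pc])
  have "T gp = 0"
  proof (rule nulD[OF hs[of "1 / (real n + 1)"] gpC])
    fix x assume "gp x \<noteq> 0"
    then have "p x \<noteq> 0" unfolding gp_def by simp
    then have "(real n + 1) * a x > 1" unfolding p_def by (auto simp: min_def max_def split: if_splits)
    then show "x \<in> {x. a x > 1 / (real n + 1)}" by (simp add: divide_less_eq mult.commute)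
  qed simp
  moreover have "T (\<lambda>x. g x - gp x) = 0"
  proof (rule nulD[OF nW Cfun_diff[OF gC gpC]])
    fix x assume h: "g x - gp x \<noteq> 0"
    then have "g x \<noteq> 0" unfolding gp_def by auto
    then have ax: "a x > 0" using GGD(2)[OF g(1)] by auto
    have "p x \<noteq> 1" using h unfolding gp_def by auto
    then have "(real n + 1) * a x - 1 < 1" unfolding p_def by (auto simp: min_def max_def split: if_splits)
    then have "a x < 2 / (real n + 1)" by (simp add: less_divide_eq mult.commute)
    then show "x \<in> W n" unfolding W_def using ax by simp
  qed
  ultimately have "T g = 0" using Tdiff[OF gC gpC] by simp
  then show False using g by simp
qed

lemma L1:
  assumes uC: "u \<in> Cfun X" and u0: "\<And>x. u x \<ge> 0"
    and H: "\<And>k t. k \<in> GG {x. u x > 0} \<Longrightarrow> nul {x. k x - t * u x > 0} \<or> nul {x. k x - t * u x < 0}"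
  shows "fin {x. u x > 0}"
proof -
  have "T k \<in> span {T u}" if k: "k \<in> GG {x. u x > 0}" for k
  proof -
    have kC: "k \<in> Cfun X" using k GGD by blast
    have kz: "u x > 0" if "k x \<noteq> 0" for x using GGD(2)[OF k that] by simp
    define P where "P t \<longleftrightarrow> \<not> nul {x. k x - t * u x > 0}" for t
    define Q where "Q t \<longleftrightarrow> \<not> nul {x. k x - t * u x < 0}" for t
    have Pmono: "P t" if "P t'" "t \<le> t'" for t t'
    proof -
      have "{x. k x - t' * u x > 0} \<subseteq> {x. k x - t * u x > 0}"
      proof
        fix x assume "x \<in> {x. k x - t' * u x > 0}"
        moreover have "t * u x \<le> t' * u x" using that(2) u0[of x] by (rule mult_right_mono)
        ultimately show "x \<in> {x. k x - t * u x > 0}" by simp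
      qed
      then show ?thesis using that(1) nul_mono unfolding P_def by blast
    qed
    have Qmono: "Q t'" if "Q t" "t \<le> t'" for t t'
    proof -
      have "{x. k x - t * u x < 0} \<subseteq> {x. k x - t' * u x < 0}"
      proof
        fix x assume "x \<in> {x. k x - t * u x < 0}"
        moreover have "t * u x \<le> t' * u x" using that(2) u0[of x] by (rule mult_right_mono)
        ultimately show "x \<in> {x. k x - t' * u x < 0}" by simp
      qed
      then show ?thesis using that(1) nul_mono unfolding Q_def by blast
    qed
    have PQ: "\<not> (P t \<and> Q t)" for t using H[OF k, of t] unfolding P_def Q_def by blast
    have "eventually (\<lambda>n. nul {x. k x - real n * u x > 0}) sequentially"
    proof (rule lemD)
      fix x
      show "eventually (\<lambda>n. x \<notin> {x. k x - real n * u x > 0}) sequentially"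
      proof (cases "u x > 0")
        case True
        obtain N where N: "k x / u x < real N" using reals_Archimedean2 by blast
        have "x \<notin> {x. k x - real n * u x > 0}" if "n \<ge> N" for n
        proof -
          have "k x / u x < real n" using N that by linarith
          then have "k x < real n * u x" using True by (simp add: divide_less_eq)
          then show ?thesis by simp
        qed
        then show ?thesis unfolding eventually_sequentially by blast
      next
        case False
        then have "k x = 0" using kz by blast
        moreover have "u x = 0" using False u0[of x] by simp
        ultimately show ?thesis by simp
      qed
    qed
    then obtain NP where NP: "\<not> P NP" unfolding eventually_sequentially P_def by blast
    have "eventually (\<lambda>n. nul {x. k x - (- real n) * u x < 0}) sequentially"
    proof (rule lemD)
      fix x
      show "eventually (\<lambda>n. x \<notin> {x. k x - (- real n) * u x < 0}) sequentially"
      proof (cases "u x > 0")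
        case True
        obtain N where N: "- k x / u x < real N" using reals_Archimedean2 by blast
        have "x \<notin> {x. k x - (- real n) * u x < 0}" if "n \<ge> N" for n
        proof -
          have "- k x / u x < real n" using N that by linarith
          then have "- k x < real n * u x" using True by (simp add: field_simps)
          then show ?thesis by simp
        qed
        then show ?thesis unfolding eventually_sequentially by blast
      next
        case False
        then have "k x = 0" using kz by blast
        moreover have "u x = 0" using False u0[of x] by simp
        ultimately show ?thesis by simp
      qed
    qed
    then obtain NQ where NQ: "\<not> Q NQ" unfolding eventually_sequentially Q_def by blast
    define S where "S = {t. P t} \<union> {NQ}"
    have Sne: "S \<noteq> {}" unfolding S_def by blast
    have Sbd: "bdd_above S"
    proof -
      have "t \<le> max NP NQ" if "t \<in> S" for t
      proof (cases "t = NQ")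
        case False
        then have "P t" using that S_def by blast
        then have "t < NP" using Pmono NP by (meson not_less)
        then show ?thesis by simp
      qed simp
      then show ?thesis unfolding bdd_above_def by blast
    qed
    define c where "c = Sup S"
    have nP: "\<not> P (c + e)" if "e > 0" for e
    proof
      assume "P (c + e)"
      then have "c + e \<in> S" unfolding S_def by blast
      then have "c + e \<le> c" unfolding c_def using cSup_upper Sbd by blast
      then show False using that by simp
    qed
    have nQ: "\<not> Q (c - e)" if "e > 0" for e
    proof
      assume q: "Q (c - e)"
      have "t \<le> c - e" if "t \<in> S" for t
      proof (rule ccontr)
        assume "\<not> t \<le> c - e"
        then have "Q t" using Qmono[OF q] by simp
        moreover have "t \<noteq> NQ" using NQ \<open>Q t\<close> by blast
        then have "P t" using \<open>t \<in> S\<close> S_def by blast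
        ultimately show False using PQ by blast
      qed
      then have "c \<le> c - e" unfolding c_def using cSup_least[OF Sne] by blast
      then show False using that by simp
    qed
    define g where "g x = k x - c * u x" for x
    have gC: "g \<in> Cfun X" unfolding g_def by (rule Cfun_diff[OF kC Cfun_scale[OF uC]])
    define \<epsilon> where "\<epsilon> n = inverse (real (Suc n))" for n
    have \<epsilon>pos: "\<epsilon> n > 0" for n unfolding \<epsilon>_def by simp
    define A where "A n = (\<lambda>x. max (g x - \<epsilon> n * u x) 0)" for n
    define B where "B n = (\<lambda>x. max (- g x - \<epsilon> n * u x) 0)" for n
    define r where "r n = (\<lambda>x. (g x - A n x) + B n x)" for n
    have AC: "A n \<in> Cfun X" for n unfolding A_def by (intro Cfun_max0 Cfun_diff gC Cfun_scale uC)
    have BC: "B n \<in> Cfun X" for n unfolding B_def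
      by (intro Cfun_max0 Cfun_diff Cfun_scale uC) (use Cfun_scale[OF gC, of "-1"] in simp)
    have rC: "r n \<in> Cfun X" for n unfolding r_def by (intro Cfun_add Cfun_diff gC AC BC)
    have TA: "T (A n) = 0" for n
    proof -
      have "nul {x. k x - (c + \<epsilon> n) * u x > 0}" using nP[OF \<epsilon>pos[of n]] unfolding P_def by blast
      then show ?thesis
      proof (rule nulD[OF _ AC])
        fix x assume "A n x \<noteq> 0"
        then have "g x - \<epsilon> n * u x > 0" unfolding A_def by (auto simp: max_def split: if_splits)
        then show "x \<in> {x. k x - (c + \<epsilon> n) * u x > 0}" unfolding g_def by (simp add: algebra_simps)
      qed
    qed
    have TB: "T (B n) = 0" for n
    proof -
      have "nul {x. k x - (c - \<epsilon> n) * u x < 0}" using nQ[OF \<epsilon>pos[of n]] unfolding Q_def by blast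
      then show ?thesis
      proof (rule nulD[OF _ BC])
        fix x assume "B n x \<noteq> 0"
        then have "- g x - \<epsilon> n * u x > 0" unfolding B_def by (auto simp: max_def split: if_splits)
        then show "x \<in> {x. k x - (c - \<epsilon> n) * u x < 0}" unfolding g_def by (simp add: algebra_simps)
      qed
    qed
    have Tr: "T (r n) = T g" for n
      unfolding r_def using Tadd[OF Cfun_diff[OF gC AC] BC] Tdiff[OF gC AC] TA TB by simp
    have rlim: "(\<lambda>n. r n x) \<longlonglongrightarrow> 0" for x
    proof (rule Lim_null_comparison)
      show "eventually (\<lambda>n. norm (r n x) \<le> \<epsilon> n * u x) sequentially"
        unfolding r_def A_def B_def
        using clamp_bound[of "\<epsilon> _ * u x" "g x"] \<epsilon>pos u0[of x] by (intro always_eventually allI) (simp add: less_imp_le)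
      show "(\<lambda>n. \<epsilon> n * u x) \<longlonglongrightarrow> 0"
        unfolding \<epsilon>_def by (intro tendsto_mult_left_zero LIMSEQ_inverse_real_of_nat)
    qed
    have "T (\<lambda>x. 0) = T g" by (rule Tconst_lim[of r]) (use rC Cfun_zero rlim Tr in auto)
    then have "T g = 0" using T0 by simp
    moreover have "T g = T k - c *\<^sub>R T u" unfolding g_def using Tdiff[OF kC Cfun_scale[OF uC]] Tsc[OF uC] by simp
    ultimately have "T k = c *\<^sub>R T u" by simp
    then show ?thesis by (simp add: span_base span_scale)
  qed
  then show ?thesis unfolding fin_def by (intro exI[of _ "{T u}"]) auto
qed


lemma split_step:
  assumes uC: "u \<in> Cfun X" and u0: "\<And>x. u x \<ge> 0" and nf: "\<not> fin {x. u x > 0}"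
  shows "\<exists>A v. v \<in> Cfun X \<and> (\<forall>x. v x \<ge> 0) \<and> \<not> fin {x. v x > 0} \<and> {x. v x > 0} \<subseteq> {x. u x > 0}
     \<and> A \<subseteq> {x. u x > 0} \<and> A \<inter> {x. v x > 0} = {} \<and> \<not> nul A"
proof -
  obtain k t where k: "k \<in> GG {x. u x > 0}" and n1: "\<not> nul {x. k x - t * u x > 0}"
      and n2: "\<not> nul {x. k x - t * u x < 0}"
    using L1[OF uC u0] nf by blast
  have kC: "k \<in> Cfun X" using k GGD by blast
  have kz: "u x > 0" if "k x \<noteq> 0" for x using GGD(2)[OF k that] by simp
  have sub: "u x > 0" if "k x - t * u x \<noteq> 0" for x
  proof (rule ccontr)
    assume "\<not> u x > 0"
    then have "u x = 0" "k x = 0" using u0[of x] kz by force+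
    then show False using that by simp
  qed
  define a where "a x = max (k x - t * u x) 0" for x
  define b where "b x = max (t * u x - k x) 0" for x
  have aC: "a \<in> Cfun X" unfolding a_def by (intro Cfun_max0 Cfun_diff kC Cfun_scale uC)
  have bC: "b \<in> Cfun X" unfolding b_def by (intro Cfun_max0 Cfun_diff kC Cfun_scale uC)
  have a0: "a x \<ge> 0" for x unfolding a_def by simp
  have b0: "b x \<ge> 0" for x unfolding b_def by simp
  have acoz: "{x. a x > 0} = {x. k x - t * u x > 0}" unfolding a_def by auto
  have bcoz: "{x. b x > 0} = {x. k x - t * u x < 0}" unfolding b_def by auto
  have aU: "u x > 0" if "a x > 0" for x using sub[of x] that unfolding a_def by auto
  have bU: "u x > 0" if "b x > 0" for x using sub[of x] that unfolding b_def by auto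
  have ab: "a x = 0" if "b x > 0" for x using that unfolding a_def b_def by auto
  obtain s where s: "s > 0" "\<not> nul {x. a x > s}" using L2[OF aC a0] n1 acoz by auto
  define p where "p x = min 1 (max 0 (2 * a x / s - 1))" for x
  have pc: "continuous_map X euclideanreal p" unfolding p_def
    using CfunD(1)[OF aC] s(1) by (intro continuous_intros) auto
  have "\<not> fin {x. a x > s/2} \<or> \<not> fin {x. u x > 0 \<and> a x < s}"
  proof (rule ccontr)
    assume "\<not> (\<not> fin {x. a x > s/2} \<or> \<not> fin {x. u x > 0 \<and> a x < s})"
    then obtain B1 B2 where B: "finite B1" "T ` GG {x. a x > s/2} \<subseteq> span B1"
       "finite B2" "T ` GG {x. u x > 0 \<and> a x < s} \<subseteq> span B2" unfolding fin_def by blast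
    have "T k' \<in> span (B1 \<union> B2)" if k': "k' \<in> GG {x. u x > 0}" for k'
    proof -
      have k'C: "k' \<in> Cfun X" using k' GGD by blast
      define k1 where "k1 x = k' x * p x" for x
      have k1C: "k1 \<in> Cfun X" unfolding k1_def by (rule Cfun_mult[OF k'C pc])
      have k1G: "k1 \<in> GG {x. a x > s/2}"
      proof (rule GGI[OF k1C])
        fix x assume "k1 x \<noteq> 0"
        then have "p x \<noteq> 0" unfolding k1_def by simp
        then have "2 * a x / s - 1 > 0" unfolding p_def by (rule clamp01)
        then show "x \<in> {x. a x > s/2}" using s(1) by (simp add: field_simps)
      qed
      have k2G: "(\<lambda>x. k' x - k1 x) \<in> GG {x. u x > 0 \<and> a x < s}"
      proof (rule GGI[OF Cfun_diff[OF k'C k1C]])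
        fix x assume h: "k' x - k1 x \<noteq> 0"
        then have "k' x \<noteq> 0" unfolding k1_def by auto
        then have ux: "u x > 0" using GGD(2)[OF k'] by auto
        have "p x \<noteq> 1" using h unfolding k1_def by auto
        then have "2 * a x / s - 1 < 1" unfolding p_def by (rule clamp01)
        then have "a x < s" using s(1) by (simp add: field_simps)
        then show "x \<in> {x. u x > 0 \<and> a x < s}" using ux by simp
      qed
      have "T k' = T k1 + T (\<lambda>x. k' x - k1 x)" using Tdiff[OF k'C k1C] by simp
      moreover have "T k1 \<in> span (B1 \<union> B2)" using B(2) k1G span_mono[of B1 "B1 \<union> B2"] by blast
      moreover have "T (\<lambda>x. k' x - k1 x) \<in> span (B1 \<union> B2)" using B(4) k2G span_mono[of B2 "B1 \<union> B2"] by blast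
      ultimately show ?thesis by (simp add: span_add)
    qed
    then have "fin {x. u x > 0}" unfolding fin_def using B(1,3) by (intro exI[of _ "B1 \<union> B2"]) auto
    then show False using nf by simp
  qed
  then show ?thesis
  proof
    assume H: "\<not> fin {x. a x > s/2}"
    obtain s' where s': "s' > 0" "\<not> nul {x. b x > s'}" using L2[OF bC b0] n2 bcoz by auto
    define v where "v x = max (a x - s/2) 0" for x
    have vC: "v \<in> Cfun X" unfolding v_def
    proof (rule CfunI)
      show "continuous_map X euclideanreal (\<lambda>x. max (a x - s / 2) 0)"
        using CfunD(1)[OF aC] by (intro continuous_intros) auto
      fix x assume "x \<notin> topspace X"
      then show "max (a x - s / 2) 0 = 0" using CfunD(2)[OF aC] s(1) by simp
    qed
    have vcoz: "{x. v x > 0} = {x. a x > s/2}" unfolding v_def by auto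
    show ?thesis
      apply (rule exI[of _ "{x. b x > s'}"], rule exI[of _ v])
      using vC H vcoz s' s(1) aU bU ab unfolding v_def by (auto simp: max_def)
  next
    assume H: "\<not> fin {x. u x > 0 \<and> a x < s}"
    define v where "v x = u x * max (s - a x) 0" for x
    have vC: "v \<in> Cfun X" unfolding v_def
      by (rule Cfun_mult[OF uC]) (use CfunD(1)[OF aC] in \<open>intro continuous_intros\<close>)
    have vcoz: "{x. v x > 0} = {x. u x > 0 \<and> a x < s}"
      unfolding v_def using u0 by (auto simp: zero_less_mult_iff max_def)
    have v0: "v x \<ge> 0" for x unfolding v_def using u0[of x] by simp
    show ?thesis
      apply (rule exI[of _ "{x. a x > s}"], rule exI[of _ v])
      using vC H vcoz v0 s aU by auto
  qed
qed

lemma main: "\<exists>B. finite B \<and> T ` Cfun X \<subseteq> span B"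
proof (rule ccontr)
  assume nf0: "\<not> (\<exists>B. finite B \<and> T ` Cfun X \<subseteq> span B)"
  define u0 where "u0 x = (if x \<in> topspace X then 1 else 0::real)" for x
  have u0C: "u0 \<in> Cfun X"
  proof (rule CfunI)
    show "continuous_map X euclideanreal u0"
      by (rule continuous_map_eq[of X euclideanreal "\<lambda>x. 1"]) (auto simp: u0_def)
  qed (simp add: u0_def)
  have "GG {x. u0 x > 0} = Cfun X"
    unfolding GG_def u0_def using CfunD(2) by fastforce
  then have nfu0: "\<not> fin {x. u0 x > 0}" using nf0 unfolding fin_def by simp
  define good where "good v \<longleftrightarrow> v \<in> Cfun X \<and> (\<forall>x. v x \<ge> 0) \<and> \<not> fin {x. v x > 0}" for v :: "'a \<Rightarrow> real"
  define rel where "rel v w \<longleftrightarrow> (\<exists>A. {x. w x > 0} \<subseteq> {x. v x > 0} \<and> A \<subseteq> {x. v x > 0}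
      \<and> A \<inter> {x. w x > 0} = {} \<and> \<not> nul A)" for v w :: "'a \<Rightarrow> real"
  have "\<exists>us. \<forall>n. good (us n) \<and> rel (us n) (us (Suc n))"
  proof (rule dependent_nat_choice[where P = "\<lambda>n v. good v" and Q = "\<lambda>n v w. rel v w"])
    have "\<forall>x. u0 x \<ge> 0" by (simp add: u0_def)
    then have "good u0" using u0C nfu0 unfolding good_def by blast
    then show "\<exists>x. good x" by blast
  next
    fix v n assume "good v"
    then have "v \<in> Cfun X" "\<And>x. v x \<ge> 0" "\<not> fin {x. v x > 0}" unfolding good_def by auto
    from split_step[OF this] obtain A w where w: "w \<in> Cfun X" "\<forall>x. w x \<ge> 0" "\<not> fin {x. w x > 0}"
      "{x. w x > 0} \<subseteq> {x. v x > 0}" "A \<subseteq> {x. v x > 0}" "A \<inter> {x. w x > 0} = {}" "\<not> nul A"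
      by blast
    have "good w" unfolding good_def using w(1-3) by blast
    moreover have "rel v w" unfolding rel_def using w(4-7) by blast
    ultimately show "\<exists>w. good w \<and> rel v w" by blast
  qed
  then obtain us where us: "\<And>n. good (us n)" "\<And>n. rel (us n) (us (Suc n))" by blast
  have "\<forall>n. \<exists>A. {x. us (Suc n) x > 0} \<subseteq> {x. us n x > 0} \<and> A \<subseteq> {x. us n x > 0}
      \<and> A \<inter> {x. us (Suc n) x > 0} = {} \<and> \<not> nul A" using us(2) unfolding rel_def by blast
  then obtain As where As: "\<And>n. {x. us (Suc n) x > 0} \<subseteq> {x. us n x > 0}"
     "\<And>n. As n \<subseteq> {x. us n x > 0}" "\<And>n. As n \<inter> {x. us (Suc n) x > 0} = {}" "\<And>n. \<not> nul (As n)"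
    by metis
  have mono: "{x. us (n + d) x > 0} \<subseteq> {x. us n x > 0}" for n d
  proof (induction d)
    case (Suc d)
    then show ?case using As(1)[of "n + d"] by auto
  qed simp
  have disj: "x \<notin> As n" if "n < m" "x \<in> As m" for n m x
  proof -
    define d where "d = m - Suc n"
    have "m = Suc n + d" using that(1) unfolding d_def by simp
    then have "As m \<subseteq> {x. us (Suc n) x > 0}" using As(2)[of m] mono[of "Suc n" d] by auto
    then show ?thesis using As(3)[of n] that(2) by blast
  qed
  have "eventually (\<lambda>n. nul (As n)) sequentially"
  proof (rule lemD)
    fix x
    show "eventually (\<lambda>n. x \<notin> As n) sequentially"
    proof (cases "\<exists>n0. x \<in> As n0")
      case True
      then obtain n0 where "x \<in> As n0" by blast
      then have "x \<notin> As n" if "n \<ge> Suc n0" for n using disj[of n0 n x] that by auto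
      then show ?thesis unfolding eventually_sequentially by blast
    qed simp
  qed
  then show False using As(4) unfolding eventually_sequentially by blast
qed

end

theorem theorem1p5:
  fixes X :: "'a topology" and T :: "('a \<Rightarrow> real) \<Rightarrow> 'b::banach"
  assumes "tychonoff_space X"
    and "linear_on_Cp X T"
    and "seq_continuous_Cp_weak X T"
  shows "\<exists>B. finite B \<and> T ` Cfun X \<subseteq> span B"
proof -
  interpret cpT X T using assms(2,3) by unfold_locales
  show ?thesis by (rule main)
qed

end
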